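(* Let $c\ge2$, $d\ge1$, and let $Y\subseteq\Sigma^c$ be a zero-set with $|Y|=4$. Then $Y$ survives $d$ rounds of tornado tabulation with probability $\left(\left(3-2/|\Sigma|\right)/|\Sigma|\right)^d$.
   Context: Let $\Sigma=\{0,\dots,2^k-1\}$, identified with $k$-bit strings, $\oplus$ bitwise xor. A simple tabulation hash function $g:\Sigma^b\to\Sigma$ is $g(x_1\cdots x_b)=T_1[x_1]\oplus\cdots\oplus T_b[x_b]$ with independent fully random tables $T_i:\Sigma\to\Sigma$. Let $\tilde h_1,\dots,\tilde h_d$ be mutually independent simple tabulation functions with $\tilde h_i:\Sigma^{c+i-1}\to\Sigma$. The simple derived key of $x=x_1\cdots x_c$ is $\tilde h'(x)=\tilde x_1\cdots\tilde x_{c+d}$ with $\tilde x_i=x_i$ for $i\le c$ and $\tilde x_i=\tilde h_{i-c}(\tilde x_1\cdots\tilde x_{i-1})$ for $c<i\le c+d$. A set $Y$ of keys in $\Sigma^b$ is a zero-set if for every position $i$ and every character $a$, the number of $y\in Y$ with $y_i=a$ is even. A zero-set $Y\subseteq\Sigma^c$ survives $d$ rounds of tornado tabulation if $\tilde h'(Y)\subseteq\Sigma^{c+d}$ is a zero-set. *)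

theory Defs
  imports "HOL-Probability.Probability_Mass_Function"
begin

text \<open>The alphabet Sigma = {0,...,2^k-1}; characters are naturals, xor is bitwise xor on nat.
Keys in Sigma^b are lists of length b with entries in Sigma.\<close>

definition alphabet :: "nat \<Rightarrow> nat set" where
  "alphabet k = {..<2^k}"

definition keys :: "nat \<Rightarrow> nat \<Rightarrow> nat list set" where
  "keys k b = {x. length x = b \<and> set x \<subseteq> alphabet k}"

definition simple_tab :: "(nat \<Rightarrow> nat \<Rightarrow> nat) \<Rightarrow> nat list \<Rightarrow> nat" where
  "simple_tab T x = fold (\<lambda>i acc. xor acc (T i (x ! i))) [0..<length x] 0"

text \<open>Tab j holds the tables of the (j+1)-th round function, defined on keys of length c+j.\<close>
fun derived_aux :: "(nat \<Rightarrow> nat \<Rightarrow> nat \<Rightarrow> nat) \<Rightarrow> nat \<Rightarrow> nat list \<Rightarrow> nat list" where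
  "derived_aux Tab 0 x = x"
| "derived_aux Tab (Suc j) x = (let y = derived_aux Tab j x in y @ [simple_tab (Tab j) y])"

definition derived_key :: "(nat \<Rightarrow> nat \<Rightarrow> nat \<Rightarrow> nat) \<Rightarrow> nat \<Rightarrow> nat list \<Rightarrow> nat list" where
  "derived_key Tab d x = derived_aux Tab d x"

text \<open>Uniform choice = independent fully random tables.\<close>
definition tables :: "nat \<Rightarrow> nat \<Rightarrow> nat \<Rightarrow> (nat \<Rightarrow> nat \<Rightarrow> nat \<Rightarrow> nat) set" where
  "tables k c d = {Tab. \<forall>j i a. Tab j i a \<in> alphabet k \<and>
      (\<not> (j < d \<and> i < c + j \<and> a \<in> alphabet k) \<longrightarrow> Tab j i a = 0)}"

definition zero_set :: "nat \<Rightarrow> nat list set \<Rightarrow> bool" where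
  "zero_set b Y = (\<forall>i<b. \<forall>a. even (card {y \<in> Y. y ! i = a}))"

end

theory Submission imports Defs begin
unbundle bit_operations_syntax

lemma xor_lt: "(a::nat) < 2^k \<Longrightarrow> b < 2^k \<Longrightarrow> a XOR b < 2^k"
proof -
  assume "a < 2^k" "b < 2^k"
  then have "take_bit k a = a" "take_bit k b = b" by (simp_all add: take_bit_nat_eq_self_iff)
  then have "take_bit k (a XOR b) = a XOR b" by (metis take_bit_xor)
  then show ?thesis by (metis take_bit_nat_less_exp)
qed

definition xs :: "(nat \<Rightarrow> nat) \<Rightarrow> nat \<Rightarrow> nat" where
  "xs f m = fold (\<lambda>i acc. acc XOR f i) [0..<m] 0"

lemma xs_0[simp]: "xs f 0 = 0" by (simp add: xs_def)
lemma xs_Suc[simp]: "xs f (Suc m) = xs f m XOR f m" by (simp add: xs_def)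

lemma xs_cong: "(\<And>i. i < m \<Longrightarrow> f i = g i) \<Longrightarrow> xs f m = xs g m"
  by (induction m) auto

lemma xs_xor: "xs f m XOR xs g m = xs (\<lambda>i. f i XOR g i) m"
  by (induction m) (simp_all add: ac_simps)

lemma xs_zero: "(\<And>i. i < m \<Longrightarrow> f i = 0) \<Longrightarrow> xs f m = 0"
  by (induction m) auto

lemma xs_lt: "(\<And>i. i < m \<Longrightarrow> f i < 2^k) \<Longrightarrow> xs f m < 2^k"
  by (induction m) (auto intro: xor_lt)

lemma simple_tab_xs: "simple_tab T x = xs (\<lambda>i. T i (x ! i)) (length x)"
  by (simp add: simple_tab_def xs_def)

lemma xs_upd: "p < m \<Longrightarrow> xs (f(p := f p XOR v)) m = xs f m XOR v"
proof (induction m)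
  case (Suc m)
  show ?case
  proof (cases "p = m")
    case True
    have eq: "xs (f(p := f p XOR v)) m = xs f m" using True by (intro xs_cong) auto
    show ?thesis unfolding xs_Suc eq using True by (simp add: ac_simps)
  next
    case False
    then show ?thesis using Suc by (simp add: ac_simps)
  qed
qed simp

lemma xor_cancel_left[simp]: "(a::nat) XOR (a XOR b) = b"
  by (simp add: xor.assoc[symmetric])

lemma xor_eq0: "((a::nat) XOR b = 0) = (a = b)"
  by (metis xor_cancel_left xor.right_neutral xor_self_eq)

lemma xor_inj: "((a::nat) XOR e = b XOR e) = (a = b)"
  by (metis xor.commute xor_cancel_left)

definition pair4 :: "nat \<Rightarrow> nat \<Rightarrow> nat \<Rightarrow> nat \<Rightarrow> bool" where
  "pair4 a b c d = ((a = b \<and> c = d) \<or> (a = c \<and> b = d) \<or> (a = d \<and> b = c))"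

lemma xor_e1[simp]: "(x::nat) XOR y XOR x = y" by (metis xor.commute xor_cancel_left xor.assoc)
lemma xor_e2[simp]: "(x::nat) XOR y XOR y = x" by (simp add: xor.assoc)

lemma xor_e3[simp]: "((x::nat) XOR y) XOR x = y" by (metis xor.commute xor_cancel_left)

lemma pair4_zero: "pair4 a b c d \<Longrightarrow> a XOR b XOR c XOR d = 0"
  by (auto simp: pair4_def)

lemma pair4_xor: "pair4 a b c (a XOR b XOR c) = (a = b \<or> a = c \<or> b = c)"
  unfolding pair4_def by auto

lemma card_filter_distinct: "distinct L \<Longrightarrow> card {y \<in> set L. P y} = length (filter P L)"
  by (metis distinct_card distinct_filter set_filter)

lemma even4: "(\<forall>z. even (length (filter (\<lambda>y. f y = z) [x1, x2, x3, x4]))) = pair4 (f x1) (f x2) (f x3) (f x4)"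
  unfolding pair4_def
proof
  assume h: "\<forall>z. even (length (filter (\<lambda>y. f y = z) [x1, x2, x3, x4]))"
  from h[rule_format, of "f x1"] h[rule_format, of "f x2"] h[rule_format, of "f x3"]
  show "f x1 = f x2 \<and> f x3 = f x4 \<or> f x1 = f x3 \<and> f x2 = f x4 \<or> f x1 = f x4 \<and> f x2 = f x3"
    by (auto split: if_splits)
qed auto

definition rtab :: "nat \<Rightarrow> nat \<Rightarrow> (nat \<Rightarrow> nat \<Rightarrow> nat) set" where
  "rtab k m = {R. \<forall>i a. R i a \<in> alphabet k \<and> (\<not> (i < m \<and> a \<in> alphabet k) \<longrightarrow> R i a = 0)}"

lemma finite_rtab: "finite (rtab k m)"
proof -
  let ?g = "\<lambda>g i a. if i<m \<and> a<2^k then g (i,a) else (0::nat)"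
  have "rtab k m \<subseteq> ?g ` (({..<m}\<times>{..<2^k}) \<rightarrow>\<^sub>E {..<(2::nat)^k})"
  proof
    fix R assume R: "R \<in> rtab k m"
    let ?f = "\<lambda>(i,a)\<in>{..<m}\<times>{..<(2::nat)^k}. R i a"
    have "R = ?g ?f" using R by (auto simp: rtab_def alphabet_def fun_eq_iff)
    moreover have "?f \<in> ({..<m}\<times>{..<2^k}) \<rightarrow>\<^sub>E {..<(2::nat)^k}"
      using R by (auto simp: rtab_def alphabet_def)
    ultimately show "R \<in> ?g ` (({..<m}\<times>{..<2^k}) \<rightarrow>\<^sub>E {..<(2::nat)^k})" by blast
  qed
  then show ?thesis by (rule finite_subset) (intro finite_imageI finite_PiE; simp)
qed

lemma simple_tab_lt: "(\<And>i a. R i a < 2^k) \<Longrightarrow> simple_tab R x < 2^k"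
  unfolding simple_tab_xs by (rule xs_lt) auto

definition sh :: "nat \<Rightarrow> nat \<Rightarrow> nat \<Rightarrow> (nat \<Rightarrow> nat \<Rightarrow> nat) \<Rightarrow> nat \<Rightarrow> nat \<Rightarrow> nat" where
  "sh p a v R = R(p := (R p)(a := R p a XOR v))"

lemma sh_invol[simp]: "sh p a v (sh p a v R) = R"
  by (auto simp: sh_def fun_eq_iff xor.assoc)

lemma sh_rtab: "R \<in> rtab k m \<Longrightarrow> p < m \<Longrightarrow> a < 2^k \<Longrightarrow> v < 2^k \<Longrightarrow> sh p a v R \<in> rtab k m"
  by (auto simp: rtab_def sh_def alphabet_def intro: xor_lt)

lemma sh_simple_tab: assumes "length x = m" "p < m"
  shows "simple_tab (sh p a v R) x = simple_tab R x XOR (if x!p = a then v else 0)"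
proof (cases "x!p = a")
  case True
  have eq: "(\<lambda>i. sh p a v R i (x!i)) = (\<lambda>i. R i (x!i))(p := R p (x!p) XOR v)"
    using True by (auto simp: sh_def fun_eq_iff)
  have "simple_tab (sh p a v R) x = xs (\<lambda>i. R i (x!i)) m XOR v"
    unfolding simple_tab_xs assms(1) eq using xs_upd[OF assms(2), of "\<lambda>i. R i (x!i)" v] True by simp
  then show ?thesis using True assms by (simp add: simple_tab_xs)
next
  case False
  have "(\<lambda>i. sh p a v R i (x!i)) = (\<lambda>i. R i (x!i))"
    using False by (auto simp: sh_def fun_eq_iff)
  then show ?thesis using False assms by (simp add: simple_tab_xs)
qed

lemma card_invol:
  assumes "\<And>x. x \<in> A \<Longrightarrow> g x \<in> A" "\<And>x. x \<in> A \<Longrightarrow> g (g x) = x"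
    and "\<And>x. x \<in> A \<Longrightarrow> P (g x) = Q x"
  shows "card {x\<in>A. P x} = card {x\<in>A. Q x}"
proof -
  have "inj_on g {x\<in>A. Q x}" by (metis (mono_tags, lifting) assms(2) inj_onI mem_Collect_eq)
  moreover have "g ` {x\<in>A. Q x} = {x\<in>A. P x}"
  proof
    show "g ` {x\<in>A. Q x} \<subseteq> {x\<in>A. P x}" using assms by auto
    show "{x\<in>A. P x} \<subseteq> g ` {x\<in>A. Q x}"
    proof
      fix x assume "x \<in> {x\<in>A. P x}"
      then have "x = g (g x)" "g x \<in> {x\<in>A. Q x}" using assms by (auto, metis)
      then show "x \<in> g ` {x\<in>A. Q x}" by blast
    qed
  qed
  ultimately show ?thesis by (metis card_image)
qed

definition Phi :: "nat list \<Rightarrow> nat list \<Rightarrow> nat list \<Rightarrow> (nat \<Rightarrow> nat \<Rightarrow> nat) \<Rightarrow> nat \<times> nat" where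
  "Phi x1 x2 x3 R = (simple_tab R x1 XOR simple_tab R x2, simple_tab R x1 XOR simple_tab R x3)"

lemma fib_shift:
  assumes len: "length x1 = m" "length x2 = m" "length x3 = m"
    and p: "p < m" and a: "x1 ! p < 2^k" and v: "v < 2^k"
  shows "card {R \<in> rtab k m. Phi x1 x2 x3 R = (s, t)}
       = card {R \<in> rtab k m. Phi x1 x2 x3 R = (s XOR (if x2!p \<noteq> x1!p then v else 0), t XOR (if x3!p \<noteq> x1!p then v else 0))}"
proof (rule sym, rule card_invol[where g = "sh p (x1!p) v"])
  fix R assume "R \<in> rtab k m"
  show "sh p (x1 ! p) v R \<in> rtab k m" by (rule sh_rtab) (use \<open>R \<in> rtab k m\<close> p a v in auto)
  show "sh p (x1 ! p) v (sh p (x1 ! p) v R) = R" by simp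
  show "(Phi x1 x2 x3 (sh p (x1 ! p) v R) = (s XOR (if x2!p \<noteq> x1!p then v else 0), t XOR (if x3!p \<noteq> x1!p then v else 0)))
     = (Phi x1 x2 x3 R = (s,t))"
  proof -
    have "Phi x1 x2 x3 (sh p (x1 ! p) v R) = (fst (Phi x1 x2 x3 R) XOR (if x2!p \<noteq> x1!p then v else 0),
       snd (Phi x1 x2 x3 R) XOR (if x3!p \<noteq> x1!p then v else 0))"
      using len p by (auto simp: Phi_def sh_simple_tab ac_simps)
    then show ?thesis by (cases "Phi x1 x2 x3 R") (simp add: xor_inj)
  qed
qed

lemma xor_inj': "((e::nat) XOR a = e XOR b) = (a = b)"
  by (metis xor_cancel_left)

lemma card_good: assumes "n \<ge> 1"
  shows "card {(s,t). s < n \<and> t < (n::nat) \<and> (s = 0 \<or> t = 0 \<or> s = t)} = 3*n - 2"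
proof -
  have eq: "{(s,t). s < n \<and> t < (n::nat) \<and> (s = 0 \<or> t = 0 \<or> s = t)}
     = ({0}\<times>{..<n} \<union> {1..<n}\<times>{0}) \<union> (\<lambda>s. (s,s)) ` {1..<n}"
    using assms by auto
  have c1: "card ({0}\<times>{..<n} \<union> {1..<n}\<times>{0}) = n + (n - 1)"
    by (subst card_Un_disjoint) auto
  have c2: "card ((\<lambda>s. (s,s)) ` {1..<n}) = n - 1"
    by (subst card_image) (auto simp: inj_on_def)
  have "card (({0}\<times>{..<n} \<union> {1..<n}\<times>{0}) \<union> (\<lambda>s. (s,s)) ` {1..<n})
     = card ({0}\<times>{..<n} \<union> {1..<n}\<times>{0}) + card ((\<lambda>s. (s,s)) ` {1..<n})"
    by (rule card_Un_disjoint) auto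
  then have "card (({0}\<times>{..<n} \<union> {1..<n}\<times>{0}) \<union> (\<lambda>s. (s,s)) ` {1..<n}) = n + (n - 1) + (n - 1)"
    using c1 c2 by simp
  then show ?thesis unfolding eq using assms by simp
qed

lemma exists_diff: "length x = m \<Longrightarrow> length y = m \<Longrightarrow> x \<noteq> y \<Longrightarrow> \<exists>i<m. x!i \<noteq> y!i"
  using nth_equalityI by metis

lemma key4:
  fixes x1 x2 x3 x4 :: "nat list"
  assumes len: "length x1 = m" "length x2 = m" "length x3 = m" "length x4 = m"
    and alph: "set x1 \<subseteq> alphabet k"
    and dist: "distinct [x1,x2,x3,x4]"
    and pair: "\<And>i. i<m \<Longrightarrow> pair4 (x1!i) (x2!i) (x3!i) (x4!i)"
  shows "card {R\<in>rtab k m. pair4 (simple_tab R x1) (simple_tab R x2) (simple_tab R x3) (simple_tab R x4)} * (2^k)^2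
     = (3*2^k - 2) * card (rtab k m)"
proof -
  define n :: nat where "n = 2^k"
  have n1: "n \<ge> 1" by (simp add: n_def)
  define fib where "fib z = {R \<in> rtab k m. Phi x1 x2 x3 R = z}" for z
  have x1a: "i < m \<Longrightarrow> x1 ! i < 2^k" for i
    by (metis alph alphabet_def len(1) lessThan_iff nth_mem subsetD)
  have shift: "card (fib (s,t)) = card (fib (s XOR (if x2!p \<noteq> x1!p then v else 0), t XOR (if x3!p \<noteq> x1!p then v else 0)))"
    if "p < m" "v < n" for p v s t
    unfolding fib_def by (rule fib_shift) (use len that x1a in \<open>auto simp: n_def\<close>)
  obtain i12 where i12: "i12 < m" "x1!i12 \<noteq> x2!i12" using exists_diff[OF len(1,2)] dist by auto
  obtain i13 where i13: "i13 < m" "x1!i13 \<noteq> x3!i13" using exists_diff[OF len(1,3)] dist by auto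
  obtain i14 where i14: "i14 < m" "x1!i14 \<noteq> x4!i14" using exists_diff[OF len(1,4)] dist by auto
  have allfib: "card (fib (s,t)) = card (fib (0,0))" if st: "s < n" "t < n" for s t
  proof -
    have stx: "s XOR t < n" using st xor_lt unfolding n_def by blast
    have caseA: "card (fib (s,t)) = card (fib (0,0))"
      if "p < m" "q < m" "x2!p \<noteq> x1!p" "x3!p = x1!p" "x2!q = x1!q" "x3!q \<noteq> x1!q" for p q
      using shift[OF that(1) st(1), of 0 0] shift[OF that(2) st(2), of s 0] that by simp
    have caseB: "card (fib (s,t)) = card (fib (0,0))"
      if "p < m" "q < m" "x2!p \<noteq> x1!p" "x3!p = x1!p" "x2!q \<noteq> x1!q" "x3!q \<noteq> x1!q" for p q
      using shift[OF that(1) stx, of 0 0] shift[OF that(2) st(2), of "s XOR t" 0] that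
      by (simp add: xor.assoc)
    have caseC: "card (fib (s,t)) = card (fib (0,0))"
      if "p < m" "q < m" "x2!p = x1!p" "x3!p \<noteq> x1!p" "x2!q \<noteq> x1!q" "x3!q \<noteq> x1!q" for p q
    proof -
      have e: "s XOR (s XOR t) = t" by simp
      show ?thesis
      using shift[OF that(1) stx, of 0 0] shift[OF that(2) st(1), of 0 "s XOR t"] that
      by (simp only: e xor_e3 if_True if_False xor.left_neutral xor.right_neutral not_True_eq_False simp_thms)
    qed
    show ?thesis
    proof (cases "x3!i12 = x1!i12")
      case True
      then show ?thesis using caseA[OF i12(1) i13(1)] caseB[OF i12(1) i13(1)] i12 i13 by metis
    next
      case F1: False
      show ?thesis
      proof (cases "x2!i13 = x1!i13")
        case True
        then show ?thesis using caseA[OF i12(1) i13(1)] caseC[OF i13(1) i12(1)] i12 i13 F1 by metis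
      next
        case F2: False
        have p14: "pair4 (x1!i14) (x2!i14) (x3!i14) (x4!i14)" using pair i14 by auto
        show ?thesis
        proof (cases "x2!i14 = x1!i14")
          case True
          then have "x3!i14 \<noteq> x1!i14" using p14 i14 unfolding pair4_def by auto
          then show ?thesis using caseC[OF i14(1) i13(1)] True i13 F2 by metis
        next
          case False
          then have "x3!i14 = x1!i14" using p14 i14 unfolding pair4_def by auto
          then show ?thesis using caseB[OF i14(1) i13(1)] False i13 F2 by metis
        qed
      qed
    qed
  qed
  have Philt: "Phi x1 x2 x3 R \<in> {..<n}\<times>{..<n}" if "R \<in> rtab k m" for R
  proof -
    have "\<And>i a. R i a < 2^k" using that by (auto simp: rtab_def alphabet_def)
    then have "\<And>x. simple_tab R x < 2^k" by (rule simple_tab_lt)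
    then show ?thesis by (auto simp: Phi_def n_def intro!: xor_lt)
  qed
  have fin: "finite (fib z)" for z unfolding fib_def using finite_rtab by auto
  have disj: "\<And>A. A \<subseteq> {..<n}\<times>{..<n} \<Longrightarrow> card (\<Union>z\<in>A. fib z) = card A * card (fib (0,0))"
  proof -
    fix A assume A: "A \<subseteq> {..<n}\<times>{..<n}"
    then have "finite A" by (rule finite_subset) auto
    then have "card (\<Union>z\<in>A. fib z) = (\<Sum>z\<in>A. card (fib z))"
      by (intro card_UN_disjoint) (auto simp: fin, auto simp: fib_def)
    also have "\<dots> = (\<Sum>z\<in>A. card (fib (0,0)))"
      by (intro sum.cong) (use A allfib in auto)
    finally show "card (\<Union>z\<in>A. fib z) = card A * card (fib (0,0))" by simp
  qed
  have "rtab k m = (\<Union>z\<in>{..<n}\<times>{..<n}. fib z)" using Philt unfolding fib_def by auto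
  then have call: "card (rtab k m) = n * n * card (fib (0,0))"
    using disj[of "{..<n}\<times>{..<n}"] by simp
  define good where "good = {(s,t). s < n \<and> t < (n::nat) \<and> (s = 0 \<or> t = 0 \<or> s = t)}"
  have ev: "pair4 (simple_tab R x1) (simple_tab R x2) (simple_tab R x3) (simple_tab R x4) = (Phi x1 x2 x3 R \<in> good)"
    if R: "R \<in> rtab k m" for R
  proof -
    define h1 where "h1 = simple_tab R x1"
    define h2 where "h2 = simple_tab R x2"
    define h3 where "h3 = simple_tab R x3"
    define h4 where "h4 = simple_tab R x4"
    have "h1 XOR h2 XOR h3 XOR h4 = 0"
      unfolding h1_def h2_def h3_def h4_def simple_tab_xs len xs_xor
    proof (rule xs_zero)
      fix i assume "i < m"
      then have "pair4 (x1!i) (x2!i) (x3!i) (x4!i)" by (rule pair)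
      then have "pair4 (R i (x1 ! i)) (R i (x2 ! i)) (R i (x3 ! i)) (R i (x4 ! i))"
        by (auto simp: pair4_def)
      then show "R i (x1 ! i) XOR R i (x2 ! i) XOR R i (x3 ! i) XOR R i (x4 ! i) = 0"
        by (rule pair4_zero)
    qed
    then have "(h1 XOR h2 XOR h3) XOR h4 = 0" by (simp only: xor.assoc)
    then have "h1 XOR h2 XOR h3 = h4" by (simp only: xor_eq0)
    then have h4: "h4 = h1 XOR h2 XOR h3" by (rule sym)
    have "pair4 h1 h2 h3 h4 = (h1 = h2 \<or> h1 = h3 \<or> h2 = h3)"
      unfolding h4 by (rule pair4_xor)
    also have "\<dots> = (h1 XOR h2 = 0 \<or> h1 XOR h3 = 0 \<or> h1 XOR h2 = h1 XOR h3)"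
      by (simp add: xor_eq0 xor_inj')
    also have "\<dots> = (Phi x1 x2 x3 R \<in> good)"
      using Philt[OF R] by (auto simp: good_def Phi_def h1_def h2_def h3_def)
    finally show ?thesis unfolding h1_def h2_def h3_def h4_def .
  qed
  have "{R\<in>rtab k m. pair4 (simple_tab R x1) (simple_tab R x2) (simple_tab R x3) (simple_tab R x4)}
      = (\<Union>z\<in>good. fib z)" using ev unfolding fib_def by auto
  then have "card {R\<in>rtab k m. pair4 (simple_tab R x1) (simple_tab R x2) (simple_tab R x3) (simple_tab R x4)}
      = (3*n - 2) * card (fib (0,0))"
    using disj[of good] card_good[OF n1] unfolding good_def by auto
  then show ?thesis using call unfolding n_def[symmetric] by (simp add: power2_eq_square)
qed

lemma card4_obtain:
  assumes "card Y = 4"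
  obtains x1 x2 x3 x4 where "Y = {x1,x2,x3,x4}" "distinct [x1,x2,x3,x4]"
proof -
  from assms obtain x1 B where B: "Y = insert x1 B" "x1 \<notin> B" "card B = 3"
    using card_Suc_eq[of Y 3] by auto
  then obtain x2 x3 x4 where "B = {x2,x3,x4}" "x2 \<noteq> x3" "x3 \<noteq> x4" "x2 \<noteq> x4"
    using card_3_iff by metis
  then show ?thesis using B that by auto
qed

lemma key:
  assumes Y: "Y' \<subseteq> keys k m" and z: "zero_set m Y'" and c4: "card Y' = 4"
  shows "card {R\<in>rtab k m. \<forall>a. even (card {y\<in>Y'. simple_tab R y = a})} * (2^k)^2
     = (3*2^k - 2) * card (rtab k m)"
proof -
  obtain x1 x2 x3 x4 where Yx: "Y' = {x1,x2,x3,x4}" and dist: "distinct [x1,x2,x3,x4]"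
    using card4_obtain[OF c4] by blast
  have Ys: "Y' = set [x1,x2,x3,x4]" using Yx by simp
  have len: "length x1 = m" "length x2 = m" "length x3 = m" "length x4 = m"
    using Y Yx by (auto simp: keys_def)
  have alph: "set x1 \<subseteq> alphabet k" using Y Yx by (auto simp: keys_def)
  have cnt: "card {y\<in>Y'. f y = a} = length (filter (\<lambda>y. f y = a) [x1,x2,x3,x4])" for f :: "nat list \<Rightarrow> nat" and a
    unfolding Ys by (rule card_filter_distinct[OF dist])
  have pair: "pair4 (x1!i) (x2!i) (x3!i) (x4!i)" if "i < m" for i
  proof -
    have "\<forall>a. even (card {y\<in>Y'. y ! i = a})" using z that by (auto simp: zero_set_def)
    then show ?thesis unfolding cnt even4 .
  qed
  have "{R\<in>rtab k m. \<forall>a. even (card {y\<in>Y'. simple_tab R y = a})}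
     = {R\<in>rtab k m. pair4 (simple_tab R x1) (simple_tab R x2) (simple_tab R x3) (simple_tab R x4)}"
    unfolding cnt even4 ..
  then show ?thesis using key4[OF len alph dist pair] by simp
qed

lemma zero_set_app:
  assumes "\<And>y. y \<in> Y' \<Longrightarrow> length y = m"
  shows "zero_set (Suc m) ((\<lambda>y. y @ [f y]) ` Y') = (zero_set m Y' \<and> (\<forall>a. even (card {y\<in>Y'. f y = a})))"
proof -
  let ?g = "\<lambda>y. y @ [f y]"
  have inj: "inj_on ?g Y'" by (auto simp: inj_on_def)
  have c: "card {z\<in>?g ` Y'. z ! i = a} = card {y\<in>Y'. ?g y ! i = a}" for i a
  proof -
    have "{z\<in>?g ` Y'. z ! i = a} = ?g ` {y\<in>Y'. ?g y ! i = a}" by auto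
    moreover have "inj_on ?g {y\<in>Y'. ?g y ! i = a}" using inj by (auto simp: inj_on_def)
    ultimately show ?thesis by (simp add: card_image)
  qed
  have lt: "i < m \<Longrightarrow> {y\<in>Y'. ?g y ! i = a} = {y\<in>Y'. y ! i = a}" for i a
    using assms by (auto simp: nth_append)
  have eq: "{y\<in>Y'. ?g y ! m = a} = {y\<in>Y'. f y = a}" for a
    using assms by (auto simp: nth_append)
  show ?thesis unfolding zero_set_def c
    by (auto simp: less_Suc_eq lt eq)
qed

lemma tables0: "tables k c 0 = {\<lambda>_ _ _. 0}"
  by (auto simp: tables_def fun_eq_iff alphabet_def)

lemma tables_d0: "T \<in> tables k c d \<Longrightarrow> T d = (\<lambda>_ _. 0)"
  by (auto simp: tables_def fun_eq_iff)

lemma tables_Suc: "tables k c (Suc d) = (\<lambda>(T,R). T(d:=R)) ` (tables k c d \<times> rtab k (c+d))"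
proof
  show "tables k c (Suc d) \<subseteq> (\<lambda>(T,R). T(d:=R)) ` (tables k c d \<times> rtab k (c+d))"
  proof
    fix Tab assume Tab: "Tab \<in> tables k c (Suc d)"
    have "Tab = (Tab(d := \<lambda>_ _. 0))(d := Tab d)" by simp
    moreover have "Tab(d := \<lambda>_ _. 0) \<in> tables k c d"
      using Tab by (auto simp: tables_def alphabet_def)
    moreover have "Tab d \<in> rtab k (c+d)" using Tab by (auto simp: tables_def rtab_def)
    ultimately show "Tab \<in> (\<lambda>(T,R). T(d:=R)) ` (tables k c d \<times> rtab k (c+d))"
      by (intro image_eqI[where x = "(Tab(d := \<lambda>_ _. 0), Tab d)"]) auto
  qed
  show "(\<lambda>(T,R). T(d:=R)) ` (tables k c d \<times> rtab k (c+d)) \<subseteq> tables k c (Suc d)"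
    by (auto simp: tables_def rtab_def less_Suc_eq)
qed

lemma tables_inj: "inj_on (\<lambda>(T,R). T(d:=R)) (tables k c d \<times> rtab k (c+d))"
proof (rule inj_onI, clarify)
  fix T R T' R' assume a: "T \<in> tables k c d" "T' \<in> tables k c d" "T(d := R) = T'(d := R')"
  then have "R = R'" by (metis fun_upd_same)
  moreover have "T = T'"
  proof
    fix j show "T j = T' j"
      using a tables_d0[OF a(1)] tables_d0[OF a(2)] by (cases "j = d") (auto dest: fun_cong[where x=j])
  qed
  ultimately show "T = T' \<and> R = R'" by simp
qed

lemma tables_fin_card: "finite (tables k c d) \<and> tables k c d \<noteq> {}"
proof (induction d)
  case 0 then show ?case by (simp add: tables0)
next
  case (Suc d)
  have "(\<lambda>_ _. 0) \<in> rtab k (c+d)" by (auto simp: rtab_def alphabet_def intro!: exI[of _ "\<lambda>_ _. 0"])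
  then show ?case using Suc finite_rtab unfolding tables_Suc by auto
qed

lemma card_tables_Suc: "card (tables k c (Suc d)) = card (tables k c d) * card (rtab k (c+d))"
  unfolding tables_Suc by (simp add: card_image[OF tables_inj] card_cartesian_product)

lemma derived_upd: "j \<le> d \<Longrightarrow> derived_aux (T(d:=R)) j x = derived_aux T j x"
  by (induction j) (auto simp: Let_def)

lemma derived_len: "length (derived_aux T j x) = length x + j"
  by (induction j) (auto simp: Let_def)

lemma derived_take: "take (length x) (derived_aux T j x) = x"
  by (induction j) (auto simp: Let_def derived_len)

lemma derived_alph: "(\<And>j i a. T j i a < 2^k) \<Longrightarrow> set x \<subseteq> alphabet k \<Longrightarrow> set (derived_aux T j x) \<subseteq> alphabet k"
  by (induction j) (auto simp: Let_def alphabet_def intro!: simple_tab_lt)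

lemma main_count:
  assumes Y: "Y \<subseteq> keys k c" and z: "zero_set c Y" and c4: "card Y = 4"
  shows "card {Tab\<in>tables k c d. zero_set (c+d) (derived_aux Tab d ` Y)} * ((2^k)^2)^d
       = (3*2^k - 2)^d * card (tables k c d)"
proof (induction d)
  case 0
  have "{Tab\<in>tables k c 0. zero_set (c+0) (derived_aux Tab 0 ` Y)} = tables k c 0" using z by auto
  then show ?case by simp
next
  case (Suc d)
  define n :: nat where "n = 2^k"
  define G where "G = {Tab\<in>tables k c d. zero_set (c+d) (derived_aux Tab d ` Y)}"
  define E where "E T = {R\<in>rtab k (c+d). \<forall>a. even (card {y\<in>derived_aux T d ` Y. simple_tab R y = a})}" for T
  have inv: "derived_aux T d ` Y \<subseteq> keys k (c+d) \<and> card (derived_aux T d ` Y) = 4" if T: "T \<in> tables k c d" for T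
  proof
    have "\<And>j i a. T j i a < 2^k" using T by (auto simp: tables_def alphabet_def)
    note da = derived_alph[of T k, OF this]
    show "derived_aux T d ` Y \<subseteq> keys k (c+d)"
    proof
      fix y assume "y \<in> derived_aux T d ` Y"
      then obtain x where x: "x \<in> Y" "y = derived_aux T d x" by blast
      then have "length x = c" "set x \<subseteq> alphabet k" using Y by (auto simp: keys_def)
      then show "y \<in> keys k (c+d)" using x da[of x d] by (simp add: keys_def derived_len)
    qed
    have "inj_on (derived_aux T d) Y"
    proof (rule inj_onI)
      fix x y assume "x \<in> Y" "y \<in> Y" "derived_aux T d x = derived_aux T d y"
      moreover have "length x = c" "length y = c" using \<open>x \<in> Y\<close> \<open>y \<in> Y\<close> Y by (auto simp: keys_def)
      ultimately show "x = y" using derived_take[of x T d] derived_take[of y T d] by simp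
    qed
    then show "card (derived_aux T d ` Y) = 4" using c4 by (simp add: card_image)
  qed
  have step: "derived_aux (T(d:=R)) (Suc d) ` Y = (\<lambda>y. y @ [simple_tab R y]) ` (derived_aux T d ` Y)" for T R
    by (auto simp: derived_upd Let_def image_image)
  have cond: "zero_set (c + Suc d) (derived_aux (T(d:=R)) (Suc d) ` Y) = (T \<in> G \<and> R \<in> E T)"
    if "T \<in> tables k c d" "R \<in> rtab k (c+d)" for T R
  proof -
    have l: "\<And>y. y \<in> derived_aux T d ` Y \<Longrightarrow> length y = c + d" using inv[OF that(1)] by (auto simp: keys_def)
    show ?thesis unfolding step using zero_set_app[OF l, where f = "simple_tab R"] that
      by (simp add: G_def E_def)
  qed
  have setG: "{Tab\<in>tables k c (Suc d). zero_set (c+Suc d) (derived_aux Tab (Suc d) ` Y)}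
      = (\<lambda>(T,R). T(d:=R)) ` (SIGMA T:G. E T)"
  proof -
    have "{Tab\<in>tables k c (Suc d). zero_set (c+Suc d) (derived_aux Tab (Suc d) ` Y)}
       = (\<lambda>(T,R). T(d:=R)) ` {p \<in> tables k c d \<times> rtab k (c+d). zero_set (c+Suc d) (derived_aux ((fst p)(d := snd p)) (Suc d) ` Y)}"
      unfolding tables_Suc by auto
    also have "{p \<in> tables k c d \<times> rtab k (c+d). zero_set (c+Suc d) (derived_aux ((fst p)(d := snd p)) (Suc d) ` Y)}
       = (SIGMA T:G. E T)"
      using cond by (auto simp: G_def E_def)
    finally show ?thesis .
  qed
  have sub: "(SIGMA T:G. E T) \<subseteq> tables k c d \<times> rtab k (c+d)" by (auto simp: G_def E_def)
  have finG: "finite G" using tables_fin_card[of k c d] by (auto simp: G_def)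
  have cardS: "card {Tab\<in>tables k c (Suc d). zero_set (c+Suc d) (derived_aux Tab (Suc d) ` Y)}
      = (\<Sum>T\<in>G. card (E T))"
    unfolding setG
    by (subst card_image[OF inj_on_subset[OF tables_inj sub]])
       (rule card_SigmaI[OF finG], auto simp: E_def finite_rtab)
  have "(\<Sum>T\<in>G. card (E T)) * n^2 = (\<Sum>T\<in>G. card (E T) * n^2)" by (simp add: sum_distrib_right)
  also have "\<dots> = (\<Sum>T\<in>G. (3*n - 2) * card (rtab k (c+d)))"
  proof (rule sum.cong)
    fix T assume T: "T \<in> G"
    then have T': "T \<in> tables k c d" "zero_set (c+d) (derived_aux T d ` Y)" by (auto simp: G_def)
    show "card (E T) * n^2 = (3*n - 2) * card (rtab k (c+d))"
      unfolding E_def n_def using key[of "derived_aux T d ` Y" k "c+d"] inv[OF T'(1)] T'(2) by auto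
  qed simp
  also have "\<dots> = card G * (3*n - 2) * card (rtab k (c+d))" by simp
  finally have A: "card {Tab\<in>tables k c (Suc d). zero_set (c+Suc d) (derived_aux Tab (Suc d) ` Y)} * n^2
      = card G * (3*n - 2) * card (rtab k (c+d))" unfolding cardS .
  have IH: "card G * (n^2)^d = (3*n - 2)^d * card (tables k c d)" using Suc.IH unfolding G_def n_def .
  have "card {Tab\<in>tables k c (Suc d). zero_set (c+Suc d) (derived_aux Tab (Suc d) ` Y)} * (n^2)^(Suc d)
      = (card {Tab\<in>tables k c (Suc d). zero_set (c+Suc d) (derived_aux Tab (Suc d) ` Y)} * n^2) * (n^2)^d"
    by (simp add: ac_simps)
  also have "\<dots> = (card G * (n^2)^d) * (3*n - 2) * card (rtab k (c+d))" unfolding A by (simp add: ac_simps)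
  also have "\<dots> = (3*n - 2)^(Suc d) * card (tables k c (Suc d))"
    unfolding IH card_tables_Suc by (simp add: ac_simps)
  finally show ?case unfolding n_def .
qed

theorem corollary8p2:
  fixes k c d :: nat and Y :: "nat list set"
  assumes "c \<ge> 2" and "d \<ge> 1"
    and "Y \<subseteq> keys k c" and "zero_set c Y" and "card Y = 4"
  shows "measure_pmf.prob (pmf_of_set (tables k c d))
           {Tab. zero_set (c + d) (derived_key Tab d ` Y)}
         = ((3 - 2 / real (card (alphabet k))) / real (card (alphabet k))) ^ d"
proof -
  define n :: nat where "n = 2^k"
  have n1: "n \<ge> 1" by (simp add: n_def)
  have can: "card (alphabet k) = n" by (simp add: alphabet_def n_def)
  have fin: "finite (tables k c d)" "tables k c d \<noteq> {}" using tables_fin_card by auto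
  define G where "G = {Tab\<in>tables k c d. zero_set (c+d) (derived_aux Tab d ` Y)}"
  have GI: "tables k c d \<inter> {Tab. zero_set (c + d) (derived_key Tab d ` Y)} = G"
    by (auto simp: G_def derived_key_def)
  have cnt: "card G * (n^2)^d = (3*n - 2)^d * card (tables k c d)"
    using main_count[OF assms(3-5), of d] unfolding G_def n_def .
  have pos: "card (tables k c d) > 0" using fin by (simp add: card_gt_0_iff)
  have r: "real (card G) * (real n^2)^d = (3 * real n - 2)^d * real (card (tables k c d))"
  proof -
    have "real (card G * (n^2)^d) = real ((3*n - 2)^d * card (tables k c d))" using cnt by simp
    moreover have "real (3*n - 2) = 3 * real n - 2" using n1 by (simp add: of_nat_diff)
    ultimately show ?thesis by (simp add: of_nat_diff)
  qed
  have "measure_pmf.prob (pmf_of_set (tables k c d)) {Tab. zero_set (c + d) (derived_key Tab d ` Y)}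
      = real (card G) / real (card (tables k c d))"
    using measure_pmf_of_set[OF fin(2,1)] GI by simp
  also have "\<dots> = (3 * real n - 2)^d / (real n^2)^d"
    using r pos n1 by (simp add: field_simps)
  also have "\<dots> = ((3 - 2 / real n) / real n) ^ d"
    using n1 by (simp add: field_simps power_divide power2_eq_square)
  finally show ?thesis unfolding can .
qed

end
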